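(* Let $\Gamma=(V,E)$ be a simple graph of order $n$ and let $\mu$ be the algebraic connectivity of $\Gamma$. Then the defensive alliance number of $\Gamma$ satisfies $$a(\Gamma)\ge \left\lceil\frac{n\mu}{n+\mu}\right\rceil$$ and the strong defensive alliance number of $\Gamma$ satisfies $$\hat{a}(\Gamma)\ge \left\lceil\frac{n(\mu+1)}{n+\mu}\right\rceil.$$
   Context: For $S\subseteq V$ and $v\in V$, $N_S(v)=\{u\in S: u\sim v\}$ and $N_{V\setminus S}(v)=\{u\in V\setminus S: u\sim v\}$. A nonempty set $S\subseteq V$ is a defensive alliance if $|N_S(v)|+1\ge |N_{V\setminus S}(v)|$ for every $v\in S$; it is a strong defensive alliance if $|N_S(v)|\ge |N_{V\setminus S}(v)|$ for every $v\in S$. $a(\Gamma)$ (resp. $\hat a(\Gamma)$) is the minimum cardinality of a defensive (resp. strong defensive) alliance in $\Gamma$. The algebraic connectivity is the second smallest eigenvalue of the Laplacian matrix of $\Gamma$. *)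

theory Defs
  imports "Jordan_Normal_Form.Char_Poly"
begin

definition simple_graph :: "nat \<Rightarrow> (nat \<Rightarrow> nat \<Rightarrow> bool) \<Rightarrow> bool" where
  "simple_graph n E \<longleftrightarrow> (\<forall>u v. E u v \<longrightarrow> u < n \<and> v < n) \<and> (\<forall>u v. E u v \<longrightarrow> E v u) \<and> (\<forall>u. \<not> E u u)"

definition nbhd :: "(nat \<Rightarrow> nat \<Rightarrow> bool) \<Rightarrow> nat set \<Rightarrow> nat \<Rightarrow> nat set" where
  "nbhd E S v = {u \<in> S. E u v}"

definition degree :: "nat \<Rightarrow> (nat \<Rightarrow> nat \<Rightarrow> bool) \<Rightarrow> nat \<Rightarrow> nat" where
  "degree n E v = card (nbhd E {0..<n} v)"

definition laplacian :: "nat \<Rightarrow> (nat \<Rightarrow> nat \<Rightarrow> bool) \<Rightarrow> real mat" where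
  "laplacian n E = mat n n (\<lambda>(i, j). if i = j then real (degree n E i)
                                       else if E i j then -1 else 0)"

text \<open>The eigenvalues of L, listed in increasing order with (algebraic) multiplicity:
  the unique sorted list of reals whose linear factors multiply to the characteristic polynomial.\<close>
definition laplacian_spectrum :: "nat \<Rightarrow> (nat \<Rightarrow> nat \<Rightarrow> bool) \<Rightarrow> real list" where
  "laplacian_spectrum n E = (THE es. sorted es \<and>
      char_poly (laplacian n E) = prod_list (map (\<lambda>e. [:- e, 1:]) es))"

definition algebraic_connectivity :: "nat \<Rightarrow> (nat \<Rightarrow> nat \<Rightarrow> bool) \<Rightarrow> real" where
  "algebraic_connectivity n E = laplacian_spectrum n E ! 1"

definition defensive_alliance :: "nat \<Rightarrow> (nat \<Rightarrow> nat \<Rightarrow> bool) \<Rightarrow> nat set \<Rightarrow> bool" where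
  "defensive_alliance n E S \<longleftrightarrow> S \<noteq> {} \<and> S \<subseteq> {0..<n} \<and>
     (\<forall>v\<in>S. card (nbhd E S v) + 1 \<ge> card (nbhd E ({0..<n} - S) v))"

definition strong_defensive_alliance :: "nat \<Rightarrow> (nat \<Rightarrow> nat \<Rightarrow> bool) \<Rightarrow> nat set \<Rightarrow> bool" where
  "strong_defensive_alliance n E S \<longleftrightarrow> S \<noteq> {} \<and> S \<subseteq> {0..<n} \<and>
     (\<forall>v\<in>S. card (nbhd E S v) \<ge> card (nbhd E ({0..<n} - S) v))"

definition alliance_number :: "nat \<Rightarrow> (nat \<Rightarrow> nat \<Rightarrow> bool) \<Rightarrow> nat" where
  "alliance_number n E = Min {card S | S. defensive_alliance n E S}"

definition strong_alliance_number :: "nat \<Rightarrow> (nat \<Rightarrow> nat \<Rightarrow> bool) \<Rightarrow> nat" where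
  "strong_alliance_number n E = Min {card S | S. strong_defensive_alliance n E S}"

end

theory Submission
  imports Defs "Jordan_Normal_Form.Schur_Decomposition"
begin

lemma sym_real_eigenvalue:
  fixes A :: "real mat"
  assumes A: "A \<in> carrier_mat n n" and sym: "transpose_mat A = A" and n: "n > 0"
  shows "\<exists>e. eigenvalue A e"
proof -
  let ?Ac = "map_mat complex_of_real A"
  have Ac: "?Ac \<in> carrier_mat n n" using A by auto
  obtain as where cp: "char_poly ?Ac = (\<Prod>a\<leftarrow>as. [:- a, 1:])" and len: "length as = n"
    using char_poly_factorized[OF Ac] by blast
  obtain a as' where as: "as = a # as'" using len n by (cases as) auto
  have "poly (char_poly ?Ac) a = 0" unfolding cp as by simp
  hence "eigenvalue ?Ac a" using eigenvalue_root_char_poly[OF Ac] by simp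
  then obtain v where v: "v \<in> carrier_vec n" "v \<noteq> 0\<^sub>v n" "?Ac *\<^sub>v v = a \<cdot>\<^sub>v v"
    unfolding eigenvalue_def eigenvector_def using Ac by auto
  have comp: "(\<Sum>j<n. complex_of_real (A $$ (i,j)) * v $ j) = a * v $ i" if i: "i < n" for i
  proof -
    have "(?Ac *\<^sub>v v) $ i = a * v $ i" using v(3) i v(1) by simp
    moreover have "(?Ac *\<^sub>v v) $ i = (\<Sum>j<n. complex_of_real (A $$ (i,j)) * v $ j)"
      using i A v(1) by (auto simp: mult_mat_vec_def scalar_prod_def lessThan_atLeast0 intro!: sum.cong)
    ultimately show ?thesis by simp
  qed
  define S where "S = (\<Sum>i<n. cnj (v $ i) * (\<Sum>j<n. complex_of_real (A $$ (i,j)) * v $ j))"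
  define N where "N = (\<Sum>i<n. cnj (v $ i) * v $ i)"
  have "S = (\<Sum>i<n. cnj (v $ i) * (a * v $ i))" unfolding S_def
    by (intro sum.cong refl) (simp add: comp)
  hence S1: "S = a * N" unfolding N_def by (simp add: sum_distrib_left algebra_simps)
  have symA: "A $$ (i,j) = A $$ (j,i)" if "i < n" "j < n" for i j
    using arg_cong[OF sym, of "\<lambda>M. M $$ (i,j)"] that A by auto
  have "cnj S = (\<Sum>i<n. \<Sum>j<n. v $ i * complex_of_real (A $$ (i,j)) * cnj (v $ j))"
    unfolding S_def by (simp add: sum_distrib_left algebra_simps)
  also have "\<dots> = (\<Sum>j<n. \<Sum>i<n. v $ i * complex_of_real (A $$ (i,j)) * cnj (v $ j))"
    by (rule sum.swap)
  also have "\<dots> = S" unfolding S_def sum_distrib_left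
    by (intro sum.cong refl, simp add: symA algebra_simps)
  finally have S2: "cnj S = S" .
  have Nr: "N = complex_of_real (\<Sum>i<n. (cmod (v $ i))^2)"
    unfolding N_def of_real_sum by (intro sum.cong refl) (simp only: complex_norm_square mult.commute)
  have "N \<noteq> 0"
  proof
    assume "N = 0"
    hence "(\<Sum>i<n. (cmod (v $ i))^2) = 0" unfolding Nr of_real_eq_0_iff .
    hence "\<forall>i\<in>{..<n}. (cmod (v $ i))^2 = 0" by (subst (asm) sum_nonneg_eq_0_iff) auto
    hence "v = 0\<^sub>v n" using v(1) by (intro eq_vecI) auto
    with v(2) show False by simp
  qed
  have "cnj a * N = a * N" using S1 S2 Nr by (metis complex_cnj_complex_of_real complex_cnj_mult)
  hence "cnj a = a" using \<open>N \<noteq> 0\<close> by simp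
  hence aR: "a = complex_of_real (Re a)" by (metis Reals_cnj_iff complex_is_Real_iff of_real_Re)
  have "complex_of_real (poly (char_poly A) (Re a)) = poly (char_poly ?Ac) a"
    by (subst aR, simp add: of_real_hom.char_poly_hom[OF A])
  also have "\<dots> = 0" by fact
  finally have "poly (char_poly A) (Re a) = 0" by simp
  thus ?thesis using eigenvalue_root_char_poly[OF A] by blast
qed

lemma spectral:
  fixes A :: "real mat"
  assumes "A \<in> carrier_mat n n" "transpose_mat A = A"
  shows "\<exists>P D. P \<in> carrier_mat n n \<and> D \<in> carrier_mat n n \<and> diagonal_mat D \<and>
     P * transpose_mat P = 1\<^sub>m n \<and> transpose_mat P * P = 1\<^sub>m n \<and> A = P * D * transpose_mat P"
  using assms
proof (induct n arbitrary: A)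
  case 0
  thus ?case
    by (intro exI[of _ "1\<^sub>m 0"] exI[of _ A]) (auto simp: diagonal_mat_def)
next
  case (Suc m A)
  let ?n = "Suc m"
  from Suc.prems have A: "A \<in> carrier_mat ?n ?n" and sym: "transpose_mat A = A" by auto
  obtain e where ev: "eigenvalue A e" using sym_real_eigenvalue[OF A sym] by auto
  define v where "v = find_eigenvector A e"
  have "eigenvector A v e" unfolding v_def by (rule find_eigenvector[OF A ev])
  hence v: "v \<in> carrier_vec ?n" "v \<noteq> 0\<^sub>v ?n" "A *\<^sub>v v = e \<cdot>\<^sub>v v"
    unfolding eigenvector_def using A by auto
  have vv: "v \<bullet> v > 0" using conjugate_square_greater_0_vec[OF v(1)] v(2) by simp
  define u where "u = (1 / sqrt (v \<bullet> v)) \<cdot>\<^sub>v v"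
  have u: "u \<in> carrier_vec ?n" unfolding u_def using v by simp
  have uu: "u \<bullet> u = 1"
    unfolding u_def using v(1) vv
    by (simp add: smult_scalar_prod_distrib scalar_prod_smult_distrib[of _ ?n] power2_eq_square[symmetric])
  have u0: "u \<noteq> 0\<^sub>v ?n" using uu u by auto
  have Au: "A *\<^sub>v u = e \<cdot>\<^sub>v u"
    unfolding u_def using v A by (simp add: mult_mat_vec smult_smult_assoc mult.commute)
  interpret cof_vec_space ?n "TYPE(real)" .
  define b where "b = basis_completion u"
  from basis_completion[OF u u0, folded b_def]
  have dist_b: "distinct b" and indep: "\<not> lin_dep (set b)" and b: "set b \<subseteq> carrier_vec ?n"
    and hdb: "hd b = u" and len_b: "length b = ?n" by auto
  obtain bs where bv: "b = u # bs" using hdb len_b by (cases b) auto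
  define ws where "ws = gram_schmidt ?n b"
  from gram_schmidt_result[OF b dist_b indep ws_def]
  have ws: "set ws \<subseteq> carrier_vec ?n" "corthogonal ws" "length ws = ?n"
    by (auto simp: len_b)
  have hdws: "hd ws = u" unfolding ws_def bv using u by simp
  define ws' where "ws' = map (\<lambda>w. (1 / sqrt (w \<bullet> w)) \<cdot>\<^sub>v w) ws"
  have ws'c: "ws' ! i \<in> carrier_vec ?n" if "i < ?n" for i
    using ws that unfolding ws'_def by auto
  have lenws': "length ws' = ?n" unfolding ws'_def using ws by simp
  have ws'0: "ws' ! 0 = u"
  proof -
    have "ws ! 0 = u" using hdws ws(3) by (cases ws) auto
    thus ?thesis unfolding ws'_def using ws(3) uu by simp
  qed
  have orth: "ws' ! i \<bullet> ws' ! j = (if i = j then 1 else 0)" if ij: "i < ?n" "j < ?n" for i j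
  proof -
    have wi: "ws ! i \<in> carrier_vec ?n" "ws ! j \<in> carrier_vec ?n" using ws ij by auto
    have o: "ws ! i \<bullet> ws ! j = 0 \<longleftrightarrow> i \<noteq> j" using corthogonalD[OF ws(2)] ij ws(3) by simp
    have pos: "ws ! i \<bullet> ws ! i > 0" using o[of] ij
      by (metis conjugate_square_ge_0_vec vec_conjugate_real corthogonalD[OF ws(2)] ws(3) order_le_less)
    show ?thesis
    proof (cases "i = j")
      case True
      thus ?thesis unfolding ws'_def using ij ws wi pos
        by (simp add: smult_scalar_prod_distrib scalar_prod_smult_distrib[of _ ?n] power2_eq_square[symmetric])
    next
      case False
      thus ?thesis unfolding ws'_def using ij ws wi o
        by (simp add: smult_scalar_prod_distrib scalar_prod_smult_distrib[of _ ?n])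
    qed
  qed
  define W where "W = mat_of_cols ?n ws'"
  have W: "W \<in> carrier_mat ?n ?n" unfolding W_def using lenws' by auto
  have colW: "col W i = ws' ! i" if "i < ?n" for i
    unfolding W_def using that lenws' ws'c by (simp add: col_mat_of_cols)
  have WtW: "transpose_mat W * W = 1\<^sub>m ?n"
    by (rule eq_matI, insert W, auto simp: colW orth)
  have WWt: "W * transpose_mat W = 1\<^sub>m ?n"
    by (rule mat_mult_left_right_inverse[OF _ W WtW], insert W, auto)
  define A' where "A' = transpose_mat W * A * W"
  have A': "A' \<in> carrier_mat ?n ?n" unfolding A'_def using W A by auto
  have symA': "transpose_mat A' = A'"
  proof -
    have "transpose_mat A' = transpose_mat (A * W) * transpose_mat (transpose_mat W)"
    proof -
      have "A' = transpose_mat W * (A * W)" unfolding A'_def using W A by simp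
      hence "transpose_mat A' = transpose_mat (A * W) * transpose_mat (transpose_mat W)"
        using W A by (simp only:) (rule transpose_mult[of _ ?n ?n], auto)
      thus ?thesis .
    qed
    also have "transpose_mat (A * W) = transpose_mat W * transpose_mat A"
      using W A by (intro transpose_mult) auto
    finally show ?thesis unfolding A'_def using sym W A by simp
  qed
  have A'col: "A' $$ (i, 0) = (if i = 0 then e else 0)" if i: "i < ?n" for i
  proof -
    have "A' $$ (i, 0) = (transpose_mat W * (A * W)) $$ (i, 0)" unfolding A'_def using W A by simp
    also have "\<dots> = row (transpose_mat W) i \<bullet> col (A * W) 0" using W A i by simp
    also have "row (transpose_mat W) i = ws' ! i" using W i colW by simp
    also have "col (A * W) 0 = A *\<^sub>v col W 0" by (rule col_mult2[OF A W]) simp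
    also have "\<dots> = e \<cdot>\<^sub>v u" using colW[of 0] ws'0 Au by simp
    also have "ws' ! i \<bullet> (e \<cdot>\<^sub>v u) = e * (ws' ! i \<bullet> ws' ! 0)"
      using ws'c[OF i] u ws'0 by (simp add: scalar_prod_smult_distrib[of _ ?n])
    finally show ?thesis using orth[OF i, of 0] by simp
  qed
  have A'row: "A' $$ (0, j) = (if j = 0 then e else 0)" if j: "j < ?n" for j
    using A'col[OF j] arg_cong[OF symA', of "\<lambda>M. M $$ (j, 0)"] A' j by simp
  define A3 where "A3 = mat m m (\<lambda>(i,j). A' $$ (Suc i, Suc j))"
  have A3: "A3 \<in> carrier_mat m m" unfolding A3_def by simp
  have symA3: "transpose_mat A3 = A3"
  proof -
    have "A' $$ (i, j) = A' $$ (j, i)" if "i < ?n" "j < ?n" for i j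
      using arg_cong[OF symA', of "\<lambda>M. M $$ (i, j)"] A' that by simp
    thus ?thesis by (intro eq_matI) (auto simp: A3_def)
  qed
  obtain P' D' where P': "P' \<in> carrier_mat m m" and D': "D' \<in> carrier_mat m m"
    and diagD': "diagonal_mat D'" and P'1: "P' * transpose_mat P' = 1\<^sub>m m"
    and P'2: "transpose_mat P' * P' = 1\<^sub>m m" and A3eq: "A3 = P' * D' * transpose_mat P'"
    using Suc.hyps[OF A3 symA3] by blast
  define E where "E = mat 1 1 (\<lambda>_. e)"
  have E: "E \<in> carrier_mat 1 1" unfolding E_def by simp
  define Bm where "Bm = four_block_mat (1\<^sub>m 1) (0\<^sub>m 1 m) (0\<^sub>m m 1) P'"
  define D where "D = four_block_mat E (0\<^sub>m 1 m) (0\<^sub>m m 1) D'"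
  have Bm: "Bm \<in> carrier_mat ?n ?n" unfolding Bm_def using four_block_carrier_mat[OF one_carrier_mat[of 1] P', of "0\<^sub>m 1 m" "0\<^sub>m m 1"] by simp
  have D: "D \<in> carrier_mat ?n ?n" unfolding D_def using four_block_carrier_mat[OF E D', of "0\<^sub>m 1 m" "0\<^sub>m m 1"] by simp
  have BmT: "transpose_mat Bm = four_block_mat (1\<^sub>m 1) (0\<^sub>m 1 m) (0\<^sub>m m 1) (transpose_mat P')"
    unfolding Bm_def using P' by (subst transpose_four_block_mat) auto
  have BmBmT: "Bm * transpose_mat Bm = 1\<^sub>m ?n"
    unfolding BmT unfolding Bm_def using P' P'1
    by (subst mult_four_block_mat[of _ 1 1 _ m _ m _ _ 1 _ m], auto)
  have BmTBm: "transpose_mat Bm * Bm = 1\<^sub>m ?n"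
    unfolding BmT unfolding Bm_def using P' P'2
    by (subst mult_four_block_mat[of _ 1 1 _ m _ m _ _ 1 _ m], auto)
  have BD: "Bm * D = four_block_mat E (0\<^sub>m 1 m) (0\<^sub>m m 1) (P' * D')"
    unfolding Bm_def D_def using P' D' E
    by (subst mult_four_block_mat[of _ 1 1 _ m _ m _ _ 1 _ m], auto)
  have BDB: "Bm * D * transpose_mat Bm = four_block_mat E (0\<^sub>m 1 m) (0\<^sub>m m 1) A3"
    unfolding BD BmT A3eq using P' D' E
    by (subst mult_four_block_mat[of _ 1 1 _ m _ m _ _ 1 _ m], auto)
  have A'eq: "A' = Bm * D * transpose_mat Bm"
    unfolding BDB
  proof (rule eq_matI)
    fix i j assume i: "i < dim_row (four_block_mat E (0\<^sub>m 1 m) (0\<^sub>m m 1) A3)"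
      and j: "j < dim_col (four_block_mat E (0\<^sub>m 1 m) (0\<^sub>m m 1) A3)"
    show "A' $$ (i, j) = four_block_mat E (0\<^sub>m 1 m) (0\<^sub>m m 1) A3 $$ (i, j)"
      using i j E A3 A'col A'row
      by (cases i; cases j; simp add: E_def A3_def)
  qed (insert A' E A3, auto)
  have diagD: "diagonal_mat D"
    using diagD' D' E unfolding diagonal_mat_def D_def by auto
  define P where "P = W * Bm"
  have P: "P \<in> carrier_mat ?n ?n" unfolding P_def using W Bm by auto
  have PT: "transpose_mat (W * Bm) = transpose_mat Bm * transpose_mat W"
    using W Bm by (rule transpose_mult)
  have BmTc: "transpose_mat Bm \<in> carrier_mat ?n ?n" "transpose_mat W \<in> carrier_mat ?n ?n"
    using Bm W by auto
  have "P * transpose_mat P = W * (Bm * transpose_mat Bm) * transpose_mat W"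
    unfolding P_def PT using W Bm BmTc by (simp add: assoc_mult_mat[of _ ?n ?n _ ?n _ ?n])
  hence PP1: "P * transpose_mat P = 1\<^sub>m ?n" unfolding BmBmT using W WWt by simp
  have "transpose_mat P * P = transpose_mat Bm * (transpose_mat W * W) * Bm"
    unfolding P_def PT using W Bm BmTc by (simp add: assoc_mult_mat[of _ ?n ?n _ ?n _ ?n])
  hence PP2: "transpose_mat P * P = 1\<^sub>m ?n" unfolding WtW using Bm BmTBm by simp
  have "A = (W * transpose_mat W) * A * (W * transpose_mat W)" using A by (simp add: WWt)
  also have "\<dots> = W * A' * transpose_mat W"
    unfolding A'_def using W A BmTc by (simp add: assoc_mult_mat[of _ ?n ?n _ ?n _ ?n])
  also have "\<dots> = P * D * transpose_mat P"
    unfolding A'eq P_def PT using W Bm BmTc D by (simp add: assoc_mult_mat[of _ ?n ?n _ ?n _ ?n])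
  finally have "A = P * D * transpose_mat P" .
  thus ?case using P D diagD PP1 PP2 by blast
qed

lemma proots_linear_prod: "proots (\<Prod>e\<leftarrow>es. [:- e, 1:]) = mset (es :: real list)"
proof (induct es)
  case (Cons e es)
  have nz: "(\<Prod>e\<leftarrow>es. [:- e, 1:]) \<noteq> (0 :: real poly)"
    unfolding prod_list_zero_iff by auto
  have "proots (\<Prod>e\<leftarrow>e # es. [:- e, 1:]) = proots [:- e, 1:] + proots (\<Prod>e\<leftarrow>es. [:- e, 1:])"
    using nz by (simp only: list.map prod_list.Cons, intro proots_mult) auto
  also have "proots [:- e, 1:] = {#e#}" using proots_linear_factor[of "- e"] by simp
  finally show ?case using Cons by simp
qed simp

lemma sorted_linear_prod_unique:
  fixes es es' :: "real list"
  assumes "sorted es" "sorted es'" "(\<Prod>e\<leftarrow>es. [:- e, 1:]) = (\<Prod>e\<leftarrow>es'. [:- e, 1:])"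
  shows "es = es'"
proof -
  have "mset es = mset es'" using arg_cong[OF assms(3), of proots] by (simp add: proots_linear_prod)
  thus ?thesis using assms(1,2) properties_for_sort by metis
qed

lemma prod_list_sort_linear: "(\<Prod>e\<leftarrow>sort es. [:- e, 1:]) = (\<Prod>e\<leftarrow>es. [:- e, 1:] :: real poly)"
  by (subst prod_mset_prod_list[symmetric])+ (simp only: mset_map mset_sort)

lemma char_poly_diag_decomp:
  fixes L :: "real mat"
  assumes L: "L \<in> carrier_mat n n" and P: "P \<in> carrier_mat n n" and D: "D \<in> carrier_mat n n"
    and diag: "diagonal_mat D" and PP1: "P * transpose_mat P = 1\<^sub>m n"
    and PP2: "transpose_mat P * P = 1\<^sub>m n" and eq: "L = P * D * transpose_mat P"
  shows "char_poly L = (\<Prod>e\<leftarrow>sort (diag_mat D). [:- e, 1:])"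
proof -
  have "similar_mat L D" unfolding similar_mat_def similar_mat_wit_def
    using L P D PP1 PP2 eq by (intro exI[of _ P] exI[of _ "transpose_mat P"]) auto
  hence "char_poly L = char_poly D" by (rule char_poly_similar)
  also have "\<dots> = (\<Prod>e\<leftarrow>diag_mat D. [:- e, 1:])"
    using D diag by (intro char_poly_upper_triangular[of _ n]) (auto simp: upper_triangular_def diagonal_mat_def)
  finally show ?thesis by (simp add: prod_list_sort_linear)
qed

lemma rayleigh_core:
  fixes ds :: "real list" and y z :: "nat \<Rightarrow> real"
  assumes len: "length ds = n" and n: "n \<ge> 2"
    and nonneg: "\<forall>i<n. ds ! i \<ge> 0" and dz: "\<forall>i<n. ds ! i * z i = 0"
    and znz: "\<exists>i<n. z i \<noteq> 0" and orth: "(\<Sum>i<n. z i * y i) = 0"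
  shows "sort ds ! 1 * (\<Sum>i<n. (y i)^2) \<le> (\<Sum>i<n. ds ! i * (y i)^2)"
proof -
  define m where "m = sort ds ! 1"
  define K where "K = {i. i < length ds \<and> ds ! i < m}"
  have cardK: "card K \<le> 1"
  proof -
    have "card K = length (filter (\<lambda>x. x < m) ds)"
      unfolding K_def by (simp add: length_filter_conv_card)
    also have "\<dots> = length (filter (\<lambda>x. x < m) (sort ds))"
      by (simp add: filter_sort)
    also have "\<dots> \<le> 1"
    proof -
      obtain a b rest where es: "sort ds = a # b # rest"
      proof -
        have "length (sort ds) \<ge> 2" using len n by simp
        thus ?thesis using that by (cases "sort ds"; cases "tl (sort ds)") auto
      qed
      have "sorted (a # b # rest)" using es by (metis sorted_sort)
      hence "\<forall>x\<in>set rest. b \<le> x" by simp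
      hence "filter (\<lambda>x. x < b) rest = []" by (auto simp: filter_empty_conv not_less)
      moreover have "m = b" unfolding m_def es by simp
      ultimately show ?thesis unfolding es by simp
    qed
    finally show ?thesis .
  qed
  have key: "y i = 0" if i: "i < n" and di: "ds ! i < m" for i
  proof -
    have others: "z j = 0" if j: "j < n" "j \<noteq> i" for j
    proof -
      have "\<not> ds ! j < m"
      proof
        assume "ds ! j < m"
        hence "{i, j} \<subseteq> K" unfolding K_def using i j di len by auto
        hence "card {i, j} \<le> card K" by (intro card_mono) (auto simp: K_def)
        with cardK j show False by simp
      qed
      hence "ds ! j > 0" using nonneg i di by force
      thus ?thesis using dz j by force
    qed
    have zi: "z i \<noteq> 0" using znz others by blast
    have "(\<Sum>j<n. z j * y j) = z i * y i + (\<Sum>j\<in>{..<n} - {i}. z j * y j)"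
      using i by (subst sum.remove[of _ i]) auto
    also have "(\<Sum>j\<in>{..<n} - {i}. z j * y j) = 0" using others by (intro sum.neutral) auto
    finally have "z i * y i = 0" using orth by simp
    thus ?thesis using zi by simp
  qed
  have "m * (\<Sum>i<n. (y i)^2) = (\<Sum>i<n. m * (y i)^2)" by (simp add: sum_distrib_left)
  also have "\<dots> \<le> (\<Sum>i<n. ds ! i * (y i)^2)"
  proof (rule sum_mono)
    fix i assume "i \<in> {..<n}"
    hence i: "i < n" by simp
    show "m * (y i)^2 \<le> ds ! i * (y i)^2"
    proof (cases "ds ! i < m")
      case True thus ?thesis using key[OF i] by simp
    next
      case False thus ?thesis by (intro mult_right_mono) auto
    qed
  qed
  finally show ?thesis unfolding m_def .
qed

lemma lap_carrier: "laplacian n E \<in> carrier_mat n n"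
  unfolding laplacian_def by simp

lemma degree_sum:
  assumes G: "simple_graph n E" and i: "i < n"
  shows "real (degree n E i) = (\<Sum>j<n. if E i j then 1 else 0)"
proof -
  have "nbhd E {0..<n} i = {j \<in> {..<n}. E i j}"
    using G unfolding nbhd_def simple_graph_def by auto
  hence "real (degree n E i) = (\<Sum>j\<in>{j \<in> {..<n}. E i j}. 1)"
    unfolding degree_def by simp
  also have "\<dots> = (\<Sum>j<n. if E i j then 1 else 0)"
    by (subst sum.inter_filter) auto
  finally show ?thesis .
qed

lemma lap_sym:
  assumes G: "simple_graph n E"
  shows "transpose_mat (laplacian n E) = laplacian n E"
  using G unfolding simple_graph_def laplacian_def by (intro eq_matI) auto

lemma lap_entry:
  assumes G: "simple_graph n E" and i: "i < n" and j: "j < n"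
  shows "laplacian n E $$ (i,j) = (if i = j then real (degree n E i) else 0) - (if E i j then 1 else 0)"
  using G i j unfolding simple_graph_def laplacian_def by auto

lemma lap_mult:
  assumes G: "simple_graph n E" and i: "i < n"
  shows "(laplacian n E *\<^sub>v vec n x) $ i = (\<Sum>j<n. if E i j then x i - x j else 0)"
proof -
  have "(laplacian n E *\<^sub>v vec n x) $ i = (\<Sum>j<n. laplacian n E $$ (i,j) * x j)"
    using i lap_carrier[of n E] by (simp add: scalar_prod_def lessThan_atLeast0 row_def)
  also have "\<dots> = (\<Sum>j<n. (if i = j then real (degree n E i) * x j else 0) - (if E i j then x j else 0))"
    using G i by (intro sum.cong refl) (simp add: lap_entry algebra_simps)
  also have "\<dots> = real (degree n E i) * x i - (\<Sum>j<n. if E i j then x j else 0)"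
    using i by (simp add: sum_subtractf)
  also have "\<dots> = (\<Sum>j<n. if E i j then x i - x j else 0)"
    using G i by (simp add: degree_sum sum_distrib_right sum_subtractf[symmetric] if_distrib if_distribR cong: if_cong)
  finally show ?thesis .
qed

lemma lap_quad:
  assumes G: "simple_graph n E"
  shows "(laplacian n E *\<^sub>v vec n x) \<bullet> vec n x = (\<Sum>i<n. \<Sum>j<n. if E i j then (x i - x j)^2 else 0) / 2"
proof -
  define T where "T = (\<Sum>i<n. \<Sum>j<n. if E i j then (x i - x j) * x i else 0)"
  have "(laplacian n E *\<^sub>v vec n x) \<bullet> vec n x = (\<Sum>i<n. (laplacian n E *\<^sub>v vec n x) $ i * x i)"
    using lap_carrier[of n E] by (simp add: scalar_prod_def lessThan_atLeast0)
  also have "\<dots> = T" unfolding T_def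
    using G by (intro sum.cong refl) (simp add: lap_mult sum_distrib_right if_distrib if_distribR cong: if_cong)
  finally have 1: "(laplacian n E *\<^sub>v vec n x) \<bullet> vec n x = T" .
  have symE: "E i j = E j i" for i j using G unfolding simple_graph_def by blast
  have "T = (\<Sum>j<n. \<Sum>i<n. if E i j then (x i - x j) * x i else 0)" unfolding T_def by (rule sum.swap)
  also have "\<dots> = (\<Sum>i<n. \<Sum>j<n. if E i j then (x j - x i) * x j else 0)"
    by (intro sum.cong refl) (simp add: symE)
  finally have 2: "T = \<dots>" .
  have "2 * T = T + T" by simp
  also have "\<dots> = (\<Sum>i<n. \<Sum>j<n. if E i j then (x i - x j)^2 else 0)"
    apply (subst (2) 2) unfolding T_def sum.distrib[symmetric]
    by (intro sum.cong refl) (auto simp: power2_eq_square algebra_simps)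
  finally show ?thesis using 1 by simp
qed

lemma lap_psd:
  assumes G: "simple_graph n E" and w: "w \<in> carrier_vec n"
  shows "(laplacian n E *\<^sub>v w) \<bullet> w \<ge> 0"
proof -
  have "w = vec n (\<lambda>i. w $ i)" using w by auto
  hence "(laplacian n E *\<^sub>v w) \<bullet> w = (\<Sum>i<n. \<Sum>j<n. if E i j then (w $ i - w $ j)^2 else 0) / 2"
    using lap_quad[OF G, of "\<lambda>i. w $ i"] by simp
  also have "\<dots> \<ge> 0" by (intro divide_nonneg_pos sum_nonneg) auto
  finally show ?thesis .
qed

lemma lap_ones:
  assumes G: "simple_graph n E"
  shows "laplacian n E *\<^sub>v vec n (\<lambda>_. 1) = 0\<^sub>v n"
  using lap_mult[OF G] lap_carrier[of n E] by (intro eq_vecI) auto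

lemma alg_conn_rayleigh:
  assumes G: "simple_graph n E" and n: "n \<ge> 2"
  shows "algebraic_connectivity n E \<ge> 0"
    and "\<And>x :: real vec. x \<in> carrier_vec n \<Longrightarrow> x \<bullet> vec n (\<lambda>_. 1) = 0 \<Longrightarrow>
           algebraic_connectivity n E * (x \<bullet> x) \<le> (laplacian n E *\<^sub>v x) \<bullet> x"
proof -
  let ?L = "laplacian n E"
  have L: "?L \<in> carrier_mat n n" by (rule lap_carrier)
  obtain P D where P: "P \<in> carrier_mat n n" and D: "D \<in> carrier_mat n n" and diag: "diagonal_mat D"
    and PP1: "P * transpose_mat P = 1\<^sub>m n" and PP2: "transpose_mat P * P = 1\<^sub>m n"
    and eq: "?L = P * D * transpose_mat P"
    using spectral[OF L lap_sym[OF G]] by blast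
  define ds where "ds = diag_mat D"
  have cp: "char_poly ?L = (\<Prod>e\<leftarrow>sort ds. [:- e, 1:])"
    unfolding ds_def by (rule char_poly_diag_decomp[OF L P D diag PP1 PP2 eq])
  have spec: "laplacian_spectrum n E = sort ds"
    unfolding laplacian_spectrum_def
  proof (rule the_equality)
    show "sorted (sort ds) \<and> char_poly ?L = (\<Prod>e\<leftarrow>sort ds. [:- e, 1:])" using cp by simp
  next
    fix es assume "sorted es \<and> char_poly ?L = (\<Prod>e\<leftarrow>es. [:- e, 1:])"
    thus "es = sort ds" using cp sorted_linear_prod_unique[of es "sort ds"] by simp
  qed
  have mu: "algebraic_connectivity n E = sort ds ! 1"
    unfolding algebraic_connectivity_def spec ..
  have lends: "length ds = n" unfolding ds_def diag_mat_def using D by simp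
  have dsi: "ds ! i = D $$ (i, i)" if "i < n" for i unfolding ds_def diag_mat_def using D that by simp
  have PT: "transpose_mat P \<in> carrier_mat n n" using P by simp
  have Dv: "(D *\<^sub>v y) $ i = D $$ (i,i) * y $ i" if i: "i < n" and y: "y \<in> carrier_vec n" for y i
  proof -
    have "(D *\<^sub>v y) $ i = (\<Sum>j\<in>{0..<n}. D $$ (i,j) * y $ j)"
      using D y i by (simp add: scalar_prod_def row_def)
    also have "\<dots> = D $$ (i,i) * y $ i"
      using diag D i unfolding diagonal_mat_def by (subst sum.remove[of _ i]) (auto intro!: sum.neutral)
    finally show ?thesis .
  qed
  have transp: "(P *\<^sub>v u) \<bullet> w = u \<bullet> (transpose_mat P *\<^sub>v w)" if "u \<in> carrier_vec n" "w \<in> carrier_vec n" for u w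
    using transpose_vec_mult_scalar[OF PT, of w u] that by simp
  have quad: "(?L *\<^sub>v w) \<bullet> w = (\<Sum>i<n. ds ! i * ((transpose_mat P *\<^sub>v w) $ i)^2)"
    if w: "w \<in> carrier_vec n" for w
  proof -
    define y where "y = transpose_mat P *\<^sub>v w"
    have y: "y \<in> carrier_vec n" unfolding y_def using P w by simp
    have "?L *\<^sub>v w = P *\<^sub>v (D *\<^sub>v y)" unfolding eq y_def using P D w PT
      by (simp add: assoc_mult_mat_vec[of _ n n _ n])
    hence "(?L *\<^sub>v w) \<bullet> w = (D *\<^sub>v y) \<bullet> y" unfolding y_def using transp D y w by (simp add: y_def)
    also have "\<dots> = (\<Sum>i\<in>{0..<n}. (D *\<^sub>v y) $ i * y $ i)"
      by (simp only: scalar_prod_def carrier_vecD[OF y])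
    also have "\<dots> = (\<Sum>i<n. ds ! i * (y $ i)^2)" unfolding lessThan_atLeast0
      by (rule sum.cong) (simp_all add: Dv[OF _ y] dsi power2_eq_square del: index_mult_mat_vec)
    finally show ?thesis unfolding y_def .
  qed
  have pres: "(transpose_mat P *\<^sub>v u) \<bullet> (transpose_mat P *\<^sub>v w) = u \<bullet> w"
    if u: "u \<in> carrier_vec n" and w: "w \<in> carrier_vec n" for u w
  proof -
    have "(transpose_mat P *\<^sub>v u) \<bullet> (transpose_mat P *\<^sub>v w) = u \<bullet> (P *\<^sub>v (transpose_mat P *\<^sub>v w))"
      using transpose_vec_mult_scalar[OF P, of "transpose_mat P *\<^sub>v w" u] u w P by simp
    also have "P *\<^sub>v (transpose_mat P *\<^sub>v w) = w"
      using P w PP1 by (simp flip: assoc_mult_mat_vec[of _ n n _ n])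
    finally show ?thesis .
  qed
  have nonneg: "\<forall>i<n. ds ! i \<ge> 0"
  proof (intro allI impI)
    fix i assume i: "i < n"
    define w where "w = P *\<^sub>v unit_vec n i"
    have w: "w \<in> carrier_vec n" unfolding w_def using P by simp
    have Tw: "transpose_mat P *\<^sub>v w = unit_vec n i"
      unfolding w_def using P PP2 by (simp flip: assoc_mult_mat_vec[of _ n n _ n])
    have "0 \<le> (?L *\<^sub>v w) \<bullet> w" by (rule lap_psd[OF G w])
    also have "\<dots> = (\<Sum>j<n. ds ! j * ((unit_vec n i) $ j)^2)" unfolding quad[OF w] Tw ..
    also have "\<dots> = (\<Sum>j<n. if j = i then ds ! j else 0)"
      by (intro sum.cong refl) (auto simp: unit_vec_def)
    also have "\<dots> = ds ! i" using i by simp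
    finally show "ds ! i \<ge> 0" .
  qed
  show "algebraic_connectivity n E \<ge> 0"
  proof -
    have "1 < length (sort ds)" using lends n by simp
    hence "sort ds ! 1 \<in> set (sort ds)" by (rule nth_mem)
    hence "sort ds ! 1 \<in> set ds" by simp
    thus ?thesis unfolding mu using nonneg lends by (auto simp: in_set_conv_nth)
  qed
  fix x :: "real vec" assume x: "x \<in> carrier_vec n" and x1: "x \<bullet> vec n (\<lambda>_. 1) = 0"
  define one where "one = vec n (\<lambda>_. 1::real)"
  have one: "one \<in> carrier_vec n" unfolding one_def by simp
  define y where "y = transpose_mat P *\<^sub>v x"
  define z where "z = transpose_mat P *\<^sub>v one"
  have y: "y \<in> carrier_vec n" unfolding y_def using P x by simp
  have z: "z \<in> carrier_vec n" unfolding z_def using P one by simp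
  have DP: "D = transpose_mat P * ?L * P"
  proof -
    have "transpose_mat P * ?L * P = (transpose_mat P * P) * D * (transpose_mat P * P)"
      unfolding eq using P D PT by (simp add: assoc_mult_mat[of _ n n _ n _ n])
    also have "\<dots> = D" unfolding PP2 using D by simp
    finally show ?thesis by simp
  qed
  have "D *\<^sub>v z = transpose_mat P *\<^sub>v (?L *\<^sub>v (P *\<^sub>v z))"
    unfolding DP using P PT L z by (simp add: assoc_mult_mat_vec[of _ n n _ n])
  also have "P *\<^sub>v z = one" unfolding z_def using P PP1 one by (simp flip: assoc_mult_mat_vec[of _ n n _ n])
  also have "?L *\<^sub>v one = 0\<^sub>v n" unfolding one_def by (rule lap_ones[OF G])
  finally have Dz: "D *\<^sub>v z = 0\<^sub>v n" using PT by auto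
  have dz: "\<forall>i<n. ds ! i * z $ i = 0"
  proof (intro allI impI)
    fix i assume i: "i < n"
    have "(D *\<^sub>v z) $ i = D $$ (i,i) * z $ i" by (rule Dv[OF i z])
    thus "ds ! i * z $ i = 0" using Dz i dsi[OF i] by simp
  qed
  have "z \<bullet> z = one \<bullet> one" unfolding z_def by (rule pres[OF one one])
  also have "\<dots> = real n" unfolding one_def by (simp add: scalar_prod_def)
  finally have zz: "z \<bullet> z = real n" .
  have znz: "\<exists>i<n. z $ i \<noteq> 0"
  proof (rule ccontr)
    assume "\<not> ?thesis"
    hence "z \<bullet> z = 0" using z by (simp add: scalar_prod_def)
    with zz n show False by simp
  qed
  have "(\<Sum>i<n. z $ i * y $ i) = z \<bullet> y" using z y by (simp add: scalar_prod_def lessThan_atLeast0)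
  also have "\<dots> = one \<bullet> x" unfolding z_def y_def by (rule pres[OF one x])
  also have "\<dots> = 0" using x1 comm_scalar_prod[OF x one] unfolding one_def by simp
  finally have orth: "(\<Sum>i<n. z $ i * y $ i) = 0" .
  have "x \<bullet> x = y \<bullet> y" unfolding y_def by (rule pres[OF x x, symmetric])
  also have "\<dots> = (\<Sum>i<n. (y $ i)^2)" using y by (simp add: scalar_prod_def lessThan_atLeast0 power2_eq_square)
  finally have xx: "x \<bullet> x = (\<Sum>i<n. (y $ i)^2)" .
  have "sort ds ! 1 * (\<Sum>i<n. (y $ i)^2) \<le> (\<Sum>i<n. ds ! i * (y $ i)^2)"
    by (rule rayleigh_core[OF lends n nonneg dz znz orth])
  thus "algebraic_connectivity n E * (x \<bullet> x) \<le> (?L *\<^sub>v x) \<bullet> x"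
    unfolding mu xx quad[OF x] y_def .
qed

lemma sum_ind_card:
  fixes S :: "nat set"
  assumes "S \<subseteq> {0..<n}"
  shows "(\<Sum>i<n. if i \<in> S then (1::real) else 0) = real (card S)"
proof -
  have "(\<Sum>i<n. if i \<in> S then (1::real) else 0) = (\<Sum>i\<in>{..<n} \<inter> S. 1)"
    using sum.inter_restrict[of "{..<n}" "\<lambda>_. (1::real)" S] by simp
  also have "{..<n} \<inter> S = S" using assms by auto
  finally show ?thesis by simp
qed

lemma cut_quad:
  assumes G: "simple_graph n E" and S: "S \<subseteq> {0..<n}" and n: "n > 0"
  defines "x \<equiv> vec n (\<lambda>i. (if i \<in> S then 1 else 0) - real (card S) / real n)"
  shows "x \<bullet> vec n (\<lambda>_. 1) = 0"
    and "x \<bullet> x = real (card S) * (real n - real (card S)) / real n"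
    and "(laplacian n E *\<^sub>v x) \<bullet> x = (\<Sum>v\<in>S. real (card (nbhd E ({0..<n} - S) v)))"
proof -
  define c where "c = real (card S) / real n"
  define f where "f = (\<lambda>i. (if i \<in> S then 1 else 0) - c)"
  have x: "x = vec n f" unfolding x_def f_def c_def ..
  have sc: "(\<Sum>i<n. if i \<in> S then (1::real) else 0) = real (card S)" by (rule sum_ind_card[OF S])
  have cn: "real n * c = real (card S)" unfolding c_def using n by simp
  show "x \<bullet> vec n (\<lambda>_. 1) = 0"
  proof -
    have "x \<bullet> vec n (\<lambda>_. 1) = (\<Sum>i<n. (if i \<in> S then 1 else 0) - c)"
      unfolding x f_def by (simp add: scalar_prod_def lessThan_atLeast0)
    also have "\<dots> = real (card S) - real n * c" by (simp add: sum_subtractf sc)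
    finally show ?thesis using cn by simp
  qed
  show "x \<bullet> x = real (card S) * (real n - real (card S)) / real n"
  proof -
    have "x \<bullet> x = (\<Sum>i<n. (f i)^2)"
      unfolding x by (simp add: scalar_prod_def lessThan_atLeast0 power2_eq_square)
    also have "\<dots> = (\<Sum>i<n. (if i \<in> S then 1 else 0) * (1 - 2 * c) + c^2)"
      by (intro sum.cong refl) (auto simp: f_def power2_eq_square algebra_simps)
    also have "\<dots> = real (card S) * (1 - 2 * c) + real n * c^2"
      by (simp add: sum.distrib sum_distrib_right[symmetric] sc)
    also have "\<dots> = real (card S) * (real n - real (card S)) / real n"
      unfolding c_def using n by (simp add: field_simps power2_eq_square)
    finally show ?thesis .
  qed
  have symE: "E i j = E j i" for i j using G unfolding simple_graph_def by blast
  have diff: "(f i - f j)^2 = (if (i \<in> S) = (j \<in> S) then 0 else 1)" for i j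
    unfolding f_def by auto
  define g where "g = (\<lambda>i j. if E i j \<and> i \<in> S \<and> j \<notin> S then (1::real) else 0)"
  have "(laplacian n E *\<^sub>v x) \<bullet> x = (\<Sum>i<n. \<Sum>j<n. if E i j then (f i - f j)^2 else 0) / 2"
    unfolding x by (rule lap_quad[OF G])
  also have "(\<Sum>i<n. \<Sum>j<n. if E i j then (f i - f j)^2 else 0) = (\<Sum>i<n. \<Sum>j<n. g i j + g j i)"
    unfolding diff g_def by (intro sum.cong refl) (auto simp: symE)
  also have "\<dots> = (\<Sum>i<n. \<Sum>j<n. g i j) + (\<Sum>i<n. \<Sum>j<n. g j i)"
    by (simp add: sum.distrib)
  also have "(\<Sum>i<n. \<Sum>j<n. g j i) = (\<Sum>i<n. \<Sum>j<n. g i j)" by (rule sum.swap)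
  also have "(\<Sum>i<n. \<Sum>j<n. g i j) = (\<Sum>v\<in>S. real (card (nbhd E ({0..<n} - S) v)))"
  proof -
    have "(\<Sum>i<n. \<Sum>j<n. g i j) = (\<Sum>i\<in>{..<n} \<inter> S. \<Sum>j<n. if E i j \<and> j \<notin> S then 1 else 0)"
      unfolding g_def by (subst sum.inter_restrict) (auto intro!: sum.cong)
    also have "{..<n} \<inter> S = S" using S by auto
    also have "(\<Sum>i\<in>S. \<Sum>j<n. if E i j \<and> j \<notin> S then (1::real) else 0) =
        (\<Sum>v\<in>S. real (card (nbhd E ({0..<n} - S) v)))"
    proof (rule sum.cong[OF refl])
      fix v assume "v \<in> S"
      have "nbhd E ({0..<n} - S) v = {..<n} \<inter> {j. E v j \<and> j \<notin> S}"
        unfolding nbhd_def using symE by auto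
      hence "real (card (nbhd E ({0..<n} - S) v)) = (\<Sum>j\<in>{..<n} \<inter> {j. E v j \<and> j \<notin> S}. 1)" by simp
      also have "\<dots> = (\<Sum>j<n. if E v j \<and> j \<notin> S then 1 else 0)"
        by (subst sum.inter_restrict) auto
      finally show "(\<Sum>j<n. if E v j \<and> j \<notin> S then (1::real) else 0) = real (card (nbhd E ({0..<n} - S) v))" by simp
    qed
    finally show ?thesis .
  qed
  finally show "(laplacian n E *\<^sub>v x) \<bullet> x = (\<Sum>v\<in>S. real (card (nbhd E ({0..<n} - S) v)))" by simp
qed

lemma nbhd_in_card:
  assumes G: "simple_graph n E" and S: "S \<subseteq> {0..<n}" and v: "v \<in> S"
  shows "card (nbhd E S v) + 1 \<le> card S"
proof -
  have fin: "finite S" using S finite_subset by blast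
  have "nbhd E S v \<subseteq> S - {v}" using G unfolding nbhd_def simple_graph_def by auto
  hence "card (nbhd E S v) \<le> card (S - {v})" using fin by (intro card_mono) auto
  also have "\<dots> = card S - 1" using v fin by simp
  finally show ?thesis using v fin card_gt_0_iff[of S] by auto
qed

lemma alliance_real_bound:
  assumes G: "simple_graph n E" and n: "n \<ge> 2" and S: "S \<subseteq> {0..<n}" and Sne: "S \<noteq> {}"
    and bnd: "\<forall>v\<in>S. real (card (nbhd E ({0..<n} - S) v)) \<le> real (card S) - t"
  shows "algebraic_connectivity n E * (real (card S) * (real n - real (card S)) / real n)
           \<le> real (card S) * (real (card S) - t)"
proof -
  define x where "x = vec n (\<lambda>i. (if i \<in> S then 1 else 0) - real (card S) / real n)"
  have n0: "n > 0" using n by simp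
  have x: "x \<in> carrier_vec n" unfolding x_def by simp
  note cq = cut_quad[OF G S n0, folded x_def]
  have "algebraic_connectivity n E * (real (card S) * (real n - real (card S)) / real n)
      = algebraic_connectivity n E * (x \<bullet> x)" using cq(2) by simp
  also have "\<dots> \<le> (laplacian n E *\<^sub>v x) \<bullet> x" by (rule alg_conn_rayleigh(2)[OF G n x cq(1)])
  also have "\<dots> = (\<Sum>v\<in>S. real (card (nbhd E ({0..<n} - S) v)))" by (rule cq(3))
  also have "\<dots> \<le> (\<Sum>v\<in>S. real (card S) - t)" using bnd by (intro sum_mono) auto
  also have "\<dots> = real (card S) * (real (card S) - t)" by simp
  finally show ?thesis .
qed

lemma final_arith1:
  fixes mu s nn :: real
  assumes mu: "mu \<ge> 0" and s: "s \<ge> 1" and nn: "nn \<ge> 2"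
    and h: "mu * (s * (nn - s) / nn) \<le> s * (s - 0)"
  shows "nn * mu / (nn + mu) \<le> s"
proof -
  have "mu * (s * (nn - s)) \<le> s * s * nn" using h nn by (simp add: field_simps)
  hence "s * (mu * (nn - s)) \<le> s * (s * nn)" by (simp add: algebra_simps)
  hence "mu * (nn - s) \<le> s * nn" using s by (simp add: mult_le_cancel_left)
  hence "nn * mu \<le> s * (nn + mu)" by (simp add: algebra_simps)
  thus ?thesis using mu nn by (simp add: divide_le_eq)
qed

lemma final_arith2:
  fixes mu s nn :: real
  assumes mu: "mu \<ge> 0" and s: "s \<ge> 1" and nn: "nn \<ge> 2"
    and h: "mu * (s * (nn - s) / nn) \<le> s * (s - 1)"
  shows "nn * (mu + 1) / (nn + mu) \<le> s"
proof -
  have "mu * (s * (nn - s)) \<le> s * (s - 1) * nn" using h nn by (simp add: field_simps)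
  hence "s * (mu * (nn - s)) \<le> s * ((s - 1) * nn)" by (simp add: algebra_simps)
  hence "mu * (nn - s) \<le> (s - 1) * nn" using s by (simp add: mult_le_cancel_left)
  hence "nn * (mu + 1) \<le> s * (nn + mu)" by (simp add: algebra_simps)
  thus ?thesis using mu nn by (simp add: divide_le_eq)
qed

theorem theorem1:
  fixes n :: nat and E :: "nat \<Rightarrow> nat \<Rightarrow> bool"
  assumes "simple_graph n E" and "n \<ge> 2"
  defines "\<mu> \<equiv> algebraic_connectivity n E"
  shows "int (alliance_number n E) \<ge> \<lceil>real n * \<mu> / (real n + \<mu>)\<rceil> \<and>
         int (strong_alliance_number n E) \<ge> \<lceil>real n * (\<mu> + 1) / (real n + \<mu>)\<rceil>"
proof -
  note G = assms(1) and n = assms(2)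
  have mu0: "\<mu> \<ge> 0" unfolding \<mu>_def by (rule alg_conn_rayleigh(1)[OF G n])
  have nn: "real n \<ge> 2" using n by simp
  have V: "nbhd E ({0..<n} - {0..<n}) v = {}" for v unfolding nbhd_def by simp
  have finA: "finite {card S | S. defensive_alliance n E S}"
    by (rule finite_subset[of _ "card ` Pow {0..<n}"]) (auto simp: defensive_alliance_def)
  have neA: "{card S | S. defensive_alliance n E S} \<noteq> {}"
    using n V by (auto simp: defensive_alliance_def intro!: exI[of _ "{0..<n}"])
  obtain S where S: "defensive_alliance n E S" and cS: "alliance_number n E = card S"
    using Min_in[OF finA neA] unfolding alliance_number_def by auto
  have finB: "finite {card S | S. strong_defensive_alliance n E S}"
    by (rule finite_subset[of _ "card ` Pow {0..<n}"]) (auto simp: strong_defensive_alliance_def)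
  have neB: "{card S | S. strong_defensive_alliance n E S} \<noteq> {}"
    using n V by (auto simp: strong_defensive_alliance_def intro!: exI[of _ "{0..<n}"])
  obtain T where T: "strong_defensive_alliance n E T" and cT: "strong_alliance_number n E = card T"
    using Min_in[OF finB neB] unfolding strong_alliance_number_def by auto
  have part1: "real n * \<mu> / (real n + \<mu>) \<le> real (card S)"
  proof -
    have Ssub: "S \<subseteq> {0..<n}" and Sne: "S \<noteq> {}" using S unfolding defensive_alliance_def by auto
    have s1: "real (card S) \<ge> 1" using Sne Ssub finite_subset[OF Ssub] by (simp add: Suc_le_eq card_gt_0_iff)
    have "\<forall>v\<in>S. real (card (nbhd E ({0..<n} - S) v)) \<le> real (card S) - 0"
    proof
      fix v assume v: "v \<in> S"
      have "card (nbhd E ({0..<n} - S) v) \<le> card (nbhd E S v) + 1"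
        using S v unfolding defensive_alliance_def by auto
      also have "\<dots> \<le> card S" by (rule nbhd_in_card[OF G Ssub v])
      finally show "real (card (nbhd E ({0..<n} - S) v)) \<le> real (card S) - 0" by simp
    qed
    from alliance_real_bound[OF G n Ssub Sne this]
    show ?thesis unfolding \<mu>_def[symmetric] by (rule final_arith1[OF mu0 s1 nn])
  qed
  have part2: "real n * (\<mu> + 1) / (real n + \<mu>) \<le> real (card T)"
  proof -
    have Tsub: "T \<subseteq> {0..<n}" and Tne: "T \<noteq> {}" using T unfolding strong_defensive_alliance_def by auto
    have t1: "real (card T) \<ge> 1" using Tne Tsub finite_subset[OF Tsub] by (simp add: Suc_le_eq card_gt_0_iff)
    have "\<forall>v\<in>T. real (card (nbhd E ({0..<n} - T) v)) \<le> real (card T) - 1"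
    proof
      fix v assume v: "v \<in> T"
      have "card (nbhd E ({0..<n} - T) v) \<le> card (nbhd E T v)"
        using T v unfolding strong_defensive_alliance_def by auto
      moreover have "card (nbhd E T v) + 1 \<le> card T" by (rule nbhd_in_card[OF G Tsub v])
      ultimately show "real (card (nbhd E ({0..<n} - T) v)) \<le> real (card T) - 1" by linarith
    qed
    from alliance_real_bound[OF G n Tsub Tne this]
    show ?thesis unfolding \<mu>_def[symmetric] by (rule final_arith2[OF mu0 t1 nn])
  qed
  show ?thesis unfolding cS cT using part1 part2 by (simp add: ceiling_le_iff)
qed

end
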